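(* Let $m,n\ge2$ be integers and let $h_n(z)=\frac{nz^n}{1+(n-1)z^n}$ and $h_{m,n}(z)=\frac{(mn)^nz^{mn}}{(1+(mn-1)z^m)^n}$. Both are rational maps having $1$ as a parabolic fixed point with multiplier $1$. For every $r\ge1$, with $D_r':=\widehat{\mathbb{C}}\setminus\overline{\{z:|z-(1-r)|<r\}}$, one has $h_n(\overline{D_r'})\subset D_r'\cup\{1\}$ and $h_{m,n}(\overline{D_r'})\subset D_r'\cup\{1\}$. In particular, the immediate parabolic basins of $1$ of $h_n$ and of $h_{m,n}$ contain $\widehat{\mathbb{C}}\setminus\overline{\mathbb{D}}$. *)

theory Defs
  imports "HOL-Analysis.Analysis"
begin

text \<open>The Riemann sphere is modelled as \<open>complex option\<close>, with \<open>None\<close> the point at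
infinity.  Its topology is the one induced by the (injective) stereographic embedding
\<open>sph\<close> onto the unit sphere of \<open>\<complex> \<times> \<real>\<close> (= R^3), north pole (0,1) = infinity.\<close>

definition sph :: "complex option \<Rightarrow> complex \<times> real" where
  "sph w = (case w of
      None \<Rightarrow> (0, 1)
    | Some z \<Rightarrow> (complex_of_real (2 / (1 + (cmod z)\<^sup>2)) * z,
                 ((cmod z)\<^sup>2 - 1) / ((cmod z)\<^sup>2 + 1)))"

definition hn :: "nat \<Rightarrow> complex \<Rightarrow> complex" where
  "hn n z = of_nat n * z ^ n / (1 + (of_nat n - 1) * z ^ n)"

definition hmn :: "nat \<Rightarrow> nat \<Rightarrow> complex \<Rightarrow> complex" where
  "hmn m n z = (of_nat (m * n)) ^ n * z ^ (m * n) / (1 + (of_nat (m * n) - 1) * z ^ m) ^ n"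

text \<open>Their extensions to the Riemann sphere (poles go to infinity; value at infinity
is the limit there).\<close>

definition hn_ext :: "nat \<Rightarrow> complex option \<Rightarrow> complex option" where
  "hn_ext n w = (case w of
      None \<Rightarrow> Some (of_nat n / (of_nat n - 1))
    | Some z \<Rightarrow> (if 1 + (of_nat n - 1) * z ^ n = 0 then None else Some (hn n z)))"

definition hmn_ext :: "nat \<Rightarrow> nat \<Rightarrow> complex option \<Rightarrow> complex option" where
  "hmn_ext m n w = (case w of
      None \<Rightarrow> Some ((of_nat (m * n)) ^ n / (of_nat (m * n) - 1) ^ n)
    | Some z \<Rightarrow> (if 1 + (of_nat (m * n) - 1) * z ^ m = 0 then None else Some (hmn m n z)))"

definition Dr' :: "real \<Rightarrow> complex option set" where
  "Dr' r = insert None (Some ` {z. cmod (z - complex_of_real (1 - r)) > r})"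

definition Dr'_closure :: "real \<Rightarrow> complex option set" where
  "Dr'_closure r = insert None (Some ` {z. cmod (z - complex_of_real (1 - r)) \<ge> r})"

definition basin :: "(complex option \<Rightarrow> complex option) \<Rightarrow> complex option \<Rightarrow> complex option set" where
  "basin f a = {w. (\<lambda>k. sph ((f ^^ k) w)) \<longlonglongrightarrow> sph a \<and> (\<forall>k. (f ^^ k) w \<noteq> a)}"

definition immediate_basin ::
  "(complex option \<Rightarrow> complex option) \<Rightarrow> complex option \<Rightarrow> complex option set \<Rightarrow> bool" where
  "immediate_basin f a U \<longleftrightarrow>
     (\<exists>w\<in>basin f a. sph ` U = connected_component_set (sph ` basin f a) (sph w)) \<and> f ` U \<subseteq> U"

end

theory Submission
  imports Defs
begin


definition Q :: "complex \<Rightarrow> real" where "Q y = Re (1 / (y - 1))"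

lemma Q_eq: assumes "y \<noteq> 1"
  shows "Q y = ((cmod y ^ 2 - 1) / cmod (y - 1) ^ 2 - 1) / 2"
proof -
  have ne: "cmod (y - 1) ^ 2 \<noteq> 0" using assms by simp
  have e1: "cmod (y-1)^2 = (Re y - 1)^2 + (Im y)^2" "cmod y ^2 = (Re y)^2 + (Im y)^2"
    by (simp_all add: cmod_power2)
  have "Q y = Re (y - 1) / cmod (y - 1) ^ 2"
    unfolding Q_def using e1 by (simp add: Re_divide)
  also have "\<dots> = (Re y - 1) / ((Re y - 1)^2 + (Im y)^2)" using e1 by simp
  finally show ?thesis using ne unfolding e1 by (simp add: field_simps power2_eq_square)
qed

lemma CS: fixes y :: complex
  shows "cmod (\<Sum>k<n. y^k) ^ 2 \<le> of_nat n * (\<Sum>k<n. (cmod y ^ 2) ^ k)"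
proof -
  have "cmod (\<Sum>k<n. y^k) \<le> (\<Sum>k<n. cmod y ^ k)"
    by (metis (no_types, lifting) norm_power norm_sum sum.cong)
  hence "cmod (\<Sum>k<n. y^k) ^ 2 \<le> (\<Sum>k<n. cmod y ^ k) ^ 2"
    by (simp add: power_mono)
  also have "\<dots> \<le> (\<Sum>k<n. (cmod y ^ k)^2) * card {..<n}"
    by (rule sum_squared_le_sum_of_squares)
  also have "\<dots> = of_nat n * (\<Sum>k<n. (cmod y ^ 2) ^ k)"
    by (simp add: power_mult[symmetric] mult.commute)
  finally show ?thesis .
qed

lemma aux_lin: fixes Nq X B N :: real
  shows "Nq = (X - N)/2 \<Longrightarrow> B \<le> X \<Longrightarrow> (B - 1)/2 - (N - 1)/2 \<le> Nq"
  by (simp add: field_simps)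

lemma keyL:
  fixes y :: complex
  assumes n: "n \<ge> 1" and y: "cmod y \<ge> 1" and yn: "y ^ n \<noteq> 1"
  shows "of_nat n * Q (y ^ n) \<ge> Q y - (real n - 1) / 2"
proof -
  have y1: "y \<noteq> 1" using yn by auto
  define S where "S = (\<Sum>k<n. y^k)"
  define \<rho> where "\<rho> = cmod y ^ 2"
  define T where "T = (\<Sum>k<n. \<rho>^k)"
  have fac: "y^n - 1 = (y - 1) * S" unfolding S_def by (rule power_diff_1_eq)
  have S0: "S \<noteq> 0" using fac yn by auto
  have facr: "\<rho>^n - 1 = (\<rho> - 1) * T" unfolding T_def by (rule power_diff_1_eq)
  have cs: "cmod S ^ 2 \<le> of_nat n * T" unfolding S_def T_def \<rho>_def by (rule CS)
  have r1: "\<rho> \<ge> 1" unfolding \<rho>_def using y by (simp add: one_le_power)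
  have a: "cmod (y^n) ^ 2 = \<rho>^n" unfolding \<rho>_def by (simp add: norm_power power_mult[symmetric] mult.commute)
  have b: "cmod (y^n - 1) ^ 2 = cmod (y - 1) ^ 2 * cmod S ^ 2" by (simp add: fac norm_mult power_mult_distrib)
  have d0: "cmod (y-1)^2 > 0" using y1 by simp
  have s0: "cmod S ^ 2 > 0" using S0 by simp
  have main: "of_nat n * ((\<rho>^n - 1) / cmod (y^n - 1) ^ 2) \<ge> (\<rho> - 1) / cmod (y - 1)^2"
  proof -
    have "(\<rho> - 1) * cmod S ^ 2 \<le> (\<rho> - 1) * (of_nat n * T)"
      using cs r1 by (intro mult_left_mono) auto
    hence "(\<rho> - 1) * cmod S ^ 2 / (cmod (y - 1) ^ 2 * cmod S ^ 2) \<le> ((\<rho> - 1) * (of_nat n * T)) / (cmod (y - 1) ^ 2 * cmod S ^ 2)"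
      using d0 s0 by (intro divide_right_mono) auto
    hence "(\<rho> - 1) / cmod (y - 1)^2 \<le> ((\<rho> - 1) * (of_nat n * T)) / (cmod (y - 1) ^ 2 * cmod S ^ 2)"
      using s0 by simp
    thus ?thesis by (simp add: b facr mult_ac)
  qed
  have q1: "Q y = ((\<rho> - 1) / cmod (y - 1)^2 - 1)/2" unfolding Q_eq[OF y1] \<rho>_def by simp
  have q2: "Q (y^n) = ((\<rho>^n - 1) / cmod (y^n - 1)^2 - 1)/2" unfolding Q_eq[OF yn] a by simp
  have "of_nat n * Q (y^n) = (of_nat n * ((\<rho>^n - 1) / cmod (y^n - 1)^2) - of_nat n)/2"
    unfolding q2 by (simp add: algebra_simps)
  thus ?thesis using main unfolding q1
    by (rule aux_lin)
qed

lemma sq1: fixes x :: real assumes "x \<ge> 0"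
  shows "1 \<le> x^2 \<longleftrightarrow> 1 \<le> x" "1 < x^2 \<longleftrightarrow> 1 < x"
proof -
  show "1 \<le> x^2 \<longleftrightarrow> 1 \<le> x"
  proof
    assume "1 \<le> x^2" thus "1 \<le> x" using assms by (metis not_le power_less_one_iff zero_less_numeral)
  qed (simp add: one_le_power)
  show "1 < x^2 \<longleftrightarrow> 1 < x"
  proof
    assume "1 < x^2" thus "1 < x" using assms by (metis not_le power_le_one)
  qed (simp add: one_less_power)
qed

lemma Q_ge_half_iff: assumes "y \<noteq> 1" shows "Q y \<ge> -1/2 \<longleftrightarrow> cmod y \<ge> 1"
proof -
  have d: "cmod (y-1)^2 > 0" using assms by simp
  have "Q y \<ge> -1/2 \<longleftrightarrow> (cmod y ^ 2 - 1) / cmod (y - 1) ^ 2 \<ge> 0" unfolding Q_eq[OF assms] by simp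
  also have "\<dots> \<longleftrightarrow> cmod y ^ 2 \<ge> 1" using d by (simp add: zero_le_divide_iff)
  also have "\<dots> \<longleftrightarrow> cmod y \<ge> 1" using sq1(1)[of "cmod y"] by simp
  finally show ?thesis .
qed

lemma Q_gt_half_iff: assumes "y \<noteq> 1" shows "Q y > -1/2 \<longleftrightarrow> cmod y > 1"
proof -
  have d: "cmod (y-1)^2 > 0" using assms by simp
  have "Q y > -1/2 \<longleftrightarrow> (cmod y ^ 2 - 1) / cmod (y - 1) ^ 2 > 0" unfolding Q_eq[OF assms] by simp
  also have "\<dots> \<longleftrightarrow> cmod y ^ 2 > 1" using d by (simp add: zero_less_divide_iff)
  also have "\<dots> \<longleftrightarrow> cmod y > 1" using sq1(2)[of "cmod y"] by simp
  finally show ?thesis .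
qed

lemma disk_eq: assumes "y \<noteq> 1" "r > 0"
  shows "cmod (y - complex_of_real (1 - r)) ^ 2 - r^2 = cmod (y - 1) ^ 2 * (1 + 2 * r * Q y)"
proof -
  have d: "cmod (y-1)^2 \<noteq> 0" using assms by simp
  have e1: "cmod (y-1)^2 = (Re y - 1)^2 + (Im y)^2" by (simp add: cmod_power2)
  have e2: "cmod (y - complex_of_real (1 - r))^2 = (Re y - 1 + r)^2 + (Im y)^2" by (simp add: cmod_power2 algebra_simps)
  have "Q y = (Re y - 1) / cmod (y - 1) ^ 2"
    unfolding Q_def using e1 by (simp add: Re_divide)
  hence h: "Q y * cmod (y - 1) ^ 2 = Re y - 1" using d by simp
  have "cmod (y - 1) ^ 2 * (1 + 2 * r * Q y) = cmod (y-1)^2 + 2 * r * (Q y * cmod (y - 1) ^ 2)"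
    by (simp add: algebra_simps)
  hence "cmod (y - 1) ^ 2 * (1 + 2 * r * Q y) = cmod (y-1)^2 + 2 * r * (Re y - 1)" by (simp only: h)
  thus ?thesis unfolding e2 e1 by (simp add: power2_eq_square algebra_simps)
qed

lemma closure_Q: assumes "z \<noteq> 1" "r \<ge> 1" "cmod (z - complex_of_real (1 - r)) \<ge> r"
  shows "Q z \<ge> -1/(2*r)"
proof -
  have "cmod (z - complex_of_real (1 - r)) ^ 2 - r^2 \<ge> 0" using assms(2,3)
    by (simp add: power_mono)
  hence "cmod (z - 1) ^ 2 * (1 + 2 * r * Q z) \<ge> 0" using disk_eq[of z r] assms(1,2) by linarith
  moreover have "cmod (z-1)^2 > 0" using assms by simp
  ultimately have "1 + 2 * r * Q z \<ge> 0" by (simp add: zero_le_mult_iff)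
  thus ?thesis using assms(2) by (simp add: field_simps)
qed

lemma Q_open: assumes "y \<noteq> 1" "r \<ge> 1" "Q y > -1/(2*r)"
  shows "cmod (y - complex_of_real (1 - r)) > r"
proof -
  have "1 + 2 * r * Q y > 0" using assms(2,3) by (simp add: field_simps)
  moreover have "cmod (y-1)^2 > 0" using assms by simp
  ultimately have "cmod (y - complex_of_real (1 - r)) ^ 2 - r^2 > 0" using disk_eq[of y r] assms by simp
  hence "r^2 < cmod (y - complex_of_real (1 - r)) ^ 2" by simp
  thus ?thesis by (rule power_less_imp_less_base) simp
qed

lemma closure_norm: assumes "r \<ge> 1" "cmod (z - complex_of_real (1 - r)) \<ge> r" shows "cmod z \<ge> 1"
proof -
  have "cmod (z - complex_of_real (1 - r)) \<le> cmod z + cmod (complex_of_real (1 - r))"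
    by (rule norm_triangle_ineq4)
  also have "cmod (complex_of_real (1 - r)) = r - 1" using assms(1) by (simp only: norm_of_real)
  finally show ?thesis using assms by simp
qed

lemma Re_nat_div: "Re (of_nat N / w) = real N * Re (1 / w)"
  by (simp add: Re_divide)

definition G :: "nat \<Rightarrow> complex \<Rightarrow> complex" where
  "G N v = of_nat N * v / (1 + (of_nat N - 1) * v)"

lemma G_props: assumes "v \<noteq> 1" "1 + (of_nat N - 1) * v \<noteq> 0" "N \<ge> 1"
  shows "G N v \<noteq> 1" "Q (G N v) = real N - 1 + real N * Q v"
proof -
  have v1: "v - 1 \<noteq> 0" using assms by simp
  have e: "G N v - 1 = (v - 1) / (1 + (of_nat N - 1) * v)"
    unfolding G_def using assms(2) by (simp add: field_simps)
  show "G N v \<noteq> 1"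
  proof
    assume "G N v = 1" hence "(v - 1) / (1 + (of_nat N - 1) * v) = 0" using e by simp
    thus False using assms by simp
  qed
  have "1 / (G N v - 1) = (of_nat N - 1) + of_nat N * (1 / (v - 1))"
    unfolding e using assms(2) v1 by (simp add: field_simps)
  moreover have "complex_of_nat N * (1 / (v-1)) = complex_of_real (real N) * (1/(v-1))" by simp
  ultimately have "1 / (G N v - 1) = complex_of_real (real N - 1) + complex_of_real (real N) * (1/(v-1))"
    by simp
  thus "Q (G N v) = real N - 1 + real N * Q v" unfolding Q_def
    by (simp add: Re_nat_div)
qed

lemma half_aux: "(a::real) \<ge> 1 \<Longrightarrow> a*(-1/2) \<le> p \<Longrightarrow> -1/2 \<le> a - 1 + p" by linarith

lemma lin2: "(A::real) - 1 + B - (n - 1)/2 \<le> C \<Longrightarrow> D - (A - n)/2 \<le> B \<Longrightarrow> D + (A - 1)/2 \<le> C"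
  by argo

lemma lin3: "(x::real) \<noteq> 0 \<Longrightarrow> x * (a + b / (2 * x)) = x * a + b / 2"
  by (simp add: field_simps)

lemma lin4: "(x::real) > 0 \<Longrightarrow> x * a \<le> x * b \<Longrightarrow> a \<le> b"
  by simp

lemma hn_G: "hn n z = G n (z ^ n)" unfolding hn_def G_def by simp

lemma hmn_G: "hmn m n z = (G (m*n) (z ^ m)) ^ n"
  unfolding hmn_def G_def by (simp add: power_divide power_mult_distrib power_mult)

lemma hn_step: assumes n: "n \<ge> 1" and z: "cmod z \<ge> 1" and zn: "z ^ n \<noteq> 1"
  and D: "1 + (of_nat n - 1) * z ^ n \<noteq> 0"
  shows "hn n z \<noteq> 1" "Q (hn n z) \<ge> Q z + (real n - 1) / 2"
proof -
  have w: "cmod (z^n) \<ge> 1" using z by (simp add: norm_power one_le_power)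
  show "hn n z \<noteq> 1" unfolding hn_G using G_props(1)[OF zn D n] .
  have "Q (hn n z) = real n - 1 + real n * Q (z^n)" unfolding hn_G using G_props(2)[OF zn D n] .
  moreover have "real n * Q (z^n) \<ge> Q z - (real n - 1) / 2" using keyL[OF n z zn] by simp
  ultimately show "Q (hn n z) \<ge> Q z + (real n - 1) / 2" by (simp add: field_simps)
qed

lemma hmn_step: assumes m: "m \<ge> 1" and n: "n \<ge> 1" and z: "cmod z \<ge> 1" and zm: "z ^ m \<noteq> 1"
  and D: "1 + (of_nat (m*n) - 1) * z ^ m \<noteq> 0" and gn: "(G (m*n) (z^m)) ^ n \<noteq> 1"
  shows "hmn m n z \<noteq> 1" "Q (hmn m n z) \<ge> Q z + (real (m*n) - 1) / (2 * real n)"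
proof -
  define g where "g = G (m*n) (z^m)"
  have N1: "m * n \<ge> 1" using m n by simp
  have w: "cmod (z^m) \<ge> 1" using z by (simp add: norm_power one_le_power)
  have g1: "g \<noteq> 1" unfolding g_def using G_props(1)[OF zm D N1] .
  have Qg: "Q g = real (m*n) - 1 + real (m*n) * Q (z^m)" unfolding g_def using G_props(2)[OF zm D N1] .
  have Qw: "Q (z^m) \<ge> -1/2" using Q_ge_half_iff[OF zm] w by simp
  have "real (m*n) * Q (z^m) \<ge> real (m*n) * (-1/2)" using Qw
    by (intro mult_left_mono) auto
  moreover have "real (m*n) \<ge> 1" using N1 by linarith
  ultimately have "Q g \<ge> -1/2" unfolding Qg
    using half_aux by blast
  hence gnorm: "cmod g \<ge> 1" using Q_ge_half_iff[OF g1] by simp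
  show "hmn m n z \<noteq> 1" unfolding hmn_G using gn .
  have k1: "real n * Q (g^n) \<ge> Q g - (real n - 1) / 2" using keyL[OF n gnorm gn[folded g_def]] by simp
  have k2: "real m * Q (z^m) \<ge> Q z - (real m - 1) / 2" using keyL[OF m z zm] by simp
  have "real (m*n) * Q (z^m) = real n * (real m * Q (z^m))" by simp
  also have "\<dots> \<ge> real n * (Q z - (real m - 1) / 2)" using k2 by (intro mult_left_mono) auto
  finally have k3: "real (m*n) * Q (z^m) \<ge> real n * (Q z - (real m - 1) / 2)" .
  have e: "real n * (Q z - (real m - 1) / 2) = real n * Q z - (real (m*n) - real n) / 2"
    by (simp add: algebra_simps)
  have "real n * Q (g^n) \<ge> real n * Q z + (real (m*n) - 1) / 2"
    using k1 k3 unfolding Qg e by (rule lin2)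
  moreover have "real n * (Q z + (real (m*n) - 1) / (2 * real n)) = real n * Q z + (real (m*n) - 1) / 2"
    using n by (intro lin3) simp
  ultimately have "real n * (Q z + (real (m*n) - 1) / (2 * real n)) \<le> real n * Q (g^n)" by simp
  hence "Q (g^n) \<ge> Q z + (real (m*n) - 1) / (2 * real n)"
    by (rule lin4[rotated]) (use n in simp)
  thus "Q (hmn m n z) \<ge> Q z + (real (m*n) - 1) / (2 * real n)" unfolding hmn_G g_def .
qed

lemma real_const_Dr: assumes "c > 1" "r \<ge> 1"
  shows "Some (complex_of_real c) \<in> Dr' r"
proof -
  have "cmod (complex_of_real c - complex_of_real (1 - r)) = cmod (complex_of_real (c - 1 + r))"
    by (simp add: algebra_simps)
  also have "\<dots> = c - 1 + r" using assms by (simp only: norm_of_real)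
  finally show ?thesis unfolding Dr'_def using assms by auto
qed

lemma gt1_div: "(K::real) > 1 \<Longrightarrow> K / (K - 1) > 1" by (simp add: field_simps)

lemma G_one: "N \<ge> 1 \<Longrightarrow> G N 1 = 1" unfolding G_def by simp

lemma hn_Dr: assumes n: "n \<ge> 2" and r: "r \<ge> 1"
  shows "hn_ext n ` Dr'_closure r \<subseteq> insert (Some 1) (Dr' r)"
proof
  fix x assume "x \<in> hn_ext n ` Dr'_closure r"
  then obtain w where w: "w \<in> Dr'_closure r" and x: "x = hn_ext n w" by auto
  show "x \<in> insert (Some 1) (Dr' r)"
  proof (cases w)
    case None
    have eq: "(of_nat n / (of_nat n - 1) :: complex) = complex_of_real (real n / (real n - 1))" by simp
    have "real n / (real n - 1) > 1" using n by (intro gt1_div) simp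
    from real_const_Dr[OF this r] have "Some (of_nat n / (of_nat n - 1)) \<in> Dr' r" unfolding eq .
    thus ?thesis using x None unfolding hn_ext_def by simp
  next
    case (Some z)
    have zc: "cmod (z - complex_of_real (1 - r)) \<ge> r" using w Some unfolding Dr'_closure_def by auto
    have z1: "cmod z \<ge> 1" using closure_norm[OF r zc] .
    show ?thesis
    proof (cases "1 + (of_nat n - 1) * z ^ n = 0")
      case True thus ?thesis using x Some unfolding hn_ext_def Dr'_def by simp
    next
      case D: False
      hence x': "x = Some (hn n z)" using x Some unfolding hn_ext_def by simp
      show ?thesis
      proof (cases "z ^ n = 1")
        case True
        hence "hn n z = 1" unfolding hn_def using n by simp
        thus ?thesis using x' by simp
      next
        case False
        have zne: "z \<noteq> 1" using False by auto
        have st: "hn n z \<noteq> 1" "Q (hn n z) \<ge> Q z + (real n - 1) / 2"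
          using hn_step[OF _ z1 False D] n by auto
        have "Q z \<ge> -1/(2*r)" using closure_Q[OF zne r zc] .
        moreover have "(real n - 1) / 2 > 0" using n by simp
        ultimately have "Q (hn n z) > -1/(2*r)" using st(2) by linarith
        hence "cmod (hn n z - complex_of_real (1 - r)) > r" using Q_open[OF st(1) r] by simp
        thus ?thesis using x' unfolding Dr'_def by auto
      qed
    qed
  qed
qed

lemma hmn_Dr: assumes m: "m \<ge> 2" and n: "n \<ge> 2" and r: "r \<ge> 1"
  shows "hmn_ext m n ` Dr'_closure r \<subseteq> insert (Some 1) (Dr' r)"
proof
  fix x assume "x \<in> hmn_ext m n ` Dr'_closure r"
  then obtain w where w: "w \<in> Dr'_closure r" and x: "x = hmn_ext m n w" by auto
  have N: "m * n \<ge> 4" using mult_le_mono[OF m n] by simp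
  show "x \<in> insert (Some 1) (Dr' r)"
  proof (cases w)
    case None
    have eq: "((of_nat (m*n))^n / (of_nat (m*n) - 1)^n :: complex) = complex_of_real ((real (m*n) / (real (m*n) - 1))^n)"
      by (simp add: power_divide)
    have "real (m*n) / (real (m*n) - 1) > 1" using N by (intro gt1_div) linarith
    hence "(real (m*n) / (real (m*n) - 1))^n > 1" using n by (intro one_less_power) auto
    from real_const_Dr[OF this r] have "Some ((of_nat (m*n))^n / (of_nat (m*n) - 1)^n) \<in> Dr' r" unfolding eq .
    thus ?thesis using x None unfolding hmn_ext_def by simp
  next
    case (Some z)
    have zc: "cmod (z - complex_of_real (1 - r)) \<ge> r" using w Some unfolding Dr'_closure_def by auto
    have z1: "cmod z \<ge> 1" using closure_norm[OF r zc] .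
    show ?thesis
    proof (cases "1 + (of_nat (m*n) - 1) * z ^ m = 0")
      case True thus ?thesis using x Some unfolding hmn_ext_def Dr'_def by simp
    next
      case D: False
      hence x': "x = Some (hmn m n z)" using x Some unfolding hmn_ext_def by simp
      show ?thesis
      proof (cases "z ^ m = 1")
        case True
        have "G (m*n) 1 = 1" using m n by (intro G_one) simp
        hence "hmn m n z = 1" unfolding hmn_G using True by simp
        thus ?thesis using x' by simp
      next
        case zm: False
        show ?thesis
        proof (cases "(G (m*n) (z^m)) ^ n = 1")
          case True
          hence "hmn m n z = 1" unfolding hmn_G .
          thus ?thesis using x' by simp
        next
          case gn: False
          have zne: "z \<noteq> 1" using zm by auto
          have st: "hmn m n z \<noteq> 1" "Q (hmn m n z) \<ge> Q z + (real (m*n) - 1) / (2 * real n)"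
            using hmn_step[OF _ _ z1 zm D gn] m n by auto
          have "Q z \<ge> -1/(2*r)" using closure_Q[OF zne r zc] .
          moreover have "(real (m*n) - 1) / (2 * real n) > 0" using N n
            by (intro divide_pos_pos) linarith+
          ultimately have "Q (hmn m n z) > -1/(2*r)" using st(2) by linarith
          hence "cmod (hmn m n z - complex_of_real (1 - r)) > r" using Q_open[OF st(1) r] by simp
          thus ?thesis using x' unfolding Dr'_def by auto
        qed
      qed
    qed
  qed
qed

lemma hn_one: "n \<ge> 2 \<Longrightarrow> hn n 1 = 1" unfolding hn_def by simp

lemma hmn_one: "m \<ge> 2 \<Longrightarrow> n \<ge> 2 \<Longrightarrow> hmn m n 1 = 1" unfolding hmn_def by simp

lemma hn_deriv: assumes "n \<ge> 2" shows "(hn n has_field_derivative 1) (at 1)"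
  unfolding hn_def[abs_def]
  apply (rule derivative_eq_intros refl | simp)+
  using assms apply simp
  using assms apply (simp add: field_simps)
  done

lemma deriv_alg: fixes K :: complex
  assumes "K = of_nat m * of_nat n" "n \<ge> 1"
  shows "K * K ^ n * K ^ n - K ^ n * (of_nat n * (of_nat m * (K - 1) * K ^ (n - Suc 0))) = K ^ n * K ^ n"
proof -
  obtain k where k: "n = Suc k" using assms(2) by (cases n) auto
  have e1: "of_nat n * (of_nat m * (K - 1) * K ^ (n - Suc 0)) = K * (K - 1) * K ^ k"
    using assms(1) k by (simp add: algebra_simps)
  have e2: "K ^ n = K * K ^ k" using k by simp
  show ?thesis unfolding e1 e2 by (simp add: algebra_simps)
qed

lemma hmn_deriv: assumes "m \<ge> 2" "n \<ge> 2" shows "(hmn m n has_field_derivative 1) (at 1)"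
  unfolding hmn_def[abs_def]
  apply (rule derivative_eq_intros refl | simp)+
  using assms apply simp
  using assms apply (simp del: of_nat_mult)
  apply (rule deriv_alg) apply simp_all
  done



definition Hom :: "complex \<Rightarrow> complex \<Rightarrow> complex \<times> real" where
  "Hom a b = (complex_of_real (2 / ((cmod a)\<^sup>2 + (cmod b)\<^sup>2)) * (a * cnj b),
              ((cmod a)\<^sup>2 - (cmod b)\<^sup>2) / ((cmod a)\<^sup>2 + (cmod b)\<^sup>2))"

lemma r1: "(B::real) > 0 \<Longrightarrow> A \<ge> 0 \<Longrightarrow> 2 / (1 + A / B) = 2 * B / (A + B)"
  by (simp add: field_simps)
lemma r2: assumes "(B::real) > 0" "A \<ge> 0" shows "(A / B - 1) / (A / B + 1) = (A - B) / (A + B)"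
proof -
  have "A/B - 1 = (A-B)/B" "A/B+1 = (A+B)/B" using assms by (simp_all add: field_simps)
  thus ?thesis using assms by simp
qed
lemma r3: "(x::real) \<ge> 0 \<Longrightarrow> (x - 1) / (x + 1) < 1" by (simp add: field_simps)
lemma r4: "(x::real) > 0 \<Longrightarrow> -1 < (x - 1) / (x + 1)" by (simp add: field_simps)
lemma r5: "(x::real) \<ge> 0 \<Longrightarrow> 1 - (x - 1) / (x + 1) = 2 / (1 + x)" by (simp add: field_simps)
lemma r6: "(x::real) \<ge> 0 \<Longrightarrow> 1 + (x - 1) / (x + 1) = 2 * x / (1 + x)" by (simp add: field_simps)
lemma c_m1[simp]: "complex_of_real t = -1 \<longleftrightarrow> t = -1"
  by (metis of_real_1 of_real_eq_iff of_real_minus)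

lemma Hom_Some: assumes "b \<noteq> 0" shows "Hom a b = sph (Some (a / b))"
proof -
  have nb: "(cmod b)\<^sup>2 > 0" using assms by simp
  have q: "(cmod (a/b))\<^sup>2 = (cmod a)\<^sup>2 / (cmod b)\<^sup>2" by (simp add: norm_divide power_divide)
  have c1: "2 / (1 + (cmod (a/b))\<^sup>2) = 2 * (cmod b)\<^sup>2 / ((cmod a)\<^sup>2 + (cmod b)\<^sup>2)"
    unfolding q using nb by (intro r1) auto
  have bb: "complex_of_real ((cmod b)\<^sup>2) = b * cnj b" by (rule complex_norm_square)
  have "complex_of_real (2 / (1 + (cmod (a/b))\<^sup>2)) * (a / b)
      = complex_of_real (2 / ((cmod a)\<^sup>2 + (cmod b)\<^sup>2)) * (complex_of_real ((cmod b)\<^sup>2) * a / b)"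
    unfolding c1 by (simp add: field_simps)
  also have "\<dots> = complex_of_real (2 / ((cmod a)\<^sup>2 + (cmod b)\<^sup>2)) * (a * cnj b)"
    unfolding bb using assms by (simp add: field_simps)
  finally have 1: "complex_of_real (2 / (1 + (cmod (a/b))\<^sup>2)) * (a / b)
      = complex_of_real (2 / ((cmod a)\<^sup>2 + (cmod b)\<^sup>2)) * (a * cnj b)" .
  have 2: "((cmod (a/b))\<^sup>2 - 1) / ((cmod (a/b))\<^sup>2 + 1) = ((cmod a)\<^sup>2 - (cmod b)\<^sup>2) / ((cmod a)\<^sup>2 + (cmod b)\<^sup>2)"
    unfolding q using nb by (intro r2) auto
  show ?thesis unfolding Hom_def sph_def using 1 2 by simp
qed

lemma Hom_None: assumes "a \<noteq> 0" shows "Hom a 0 = sph None"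
  using assms unfolding Hom_def sph_def by simp

lemma ofr_scale: assumes "(k::real) > 0"
  shows "complex_of_real (2 / (k * S)) * (complex_of_real k * X) = complex_of_real (2 / S) * X"
proof -
  have "complex_of_real (2 / (k * S)) * (complex_of_real k * X) = complex_of_real (2 / (k * S) * k) * X"
    by (simp only: of_real_mult mult.assoc)
  also have "2 / (k * S) * k = 2 / S" using assms by simp
  finally show ?thesis .
qed

lemma Hom_scale: assumes "c \<noteq> 0" shows "Hom (c * a) (c * b) = Hom a b"
proof -
  have nc: "(cmod c)\<^sup>2 > 0" using assms by simp
  have cc: "c * cnj c = complex_of_real ((cmod c)\<^sup>2)" by (rule complex_norm_square[symmetric])
  have s: "(cmod (c*a))\<^sup>2 + (cmod (c*b))\<^sup>2 = (cmod c)\<^sup>2 * ((cmod a)\<^sup>2 + (cmod b)\<^sup>2)"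
    "(cmod (c*a))\<^sup>2 - (cmod (c*b))\<^sup>2 = (cmod c)\<^sup>2 * ((cmod a)\<^sup>2 - (cmod b)\<^sup>2)"
    by (simp_all add: norm_mult power_mult_distrib algebra_simps)
  have 1: "complex_of_real (2 / ((cmod c)\<^sup>2 * ((cmod a)\<^sup>2 + (cmod b)\<^sup>2))) * (c * a * cnj (c * b))
     = complex_of_real (2 / ((cmod a)\<^sup>2 + (cmod b)\<^sup>2)) * (a * cnj b)"
  proof -
    have "c * a * cnj (c * b) = (c * cnj c) * (a * cnj b)"
      by (simp add: algebra_simps)
    hence "c * a * cnj (c * b) = complex_of_real ((cmod c)\<^sup>2) * (a * cnj b)" unfolding cc .
    thus ?thesis using nc by (simp only: ofr_scale)
  qed
  show ?thesis unfolding Hom_def s using 1 nc by simp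
qed

lemma Hom_cont:
  assumes "continuous (at x within S) A" "continuous (at x within S) B" "A x \<noteq> 0 \<or> B x \<noteq> 0"
  shows "continuous (at x within S) (\<lambda>x. Hom (A x) (B x))"
proof -
  have nz: "(cmod (A x))\<^sup>2 + (cmod (B x))\<^sup>2 \<noteq> 0" using assms(3)
    by (metis add_nonneg_eq_0_iff norm_eq_zero power_eq_0_iff zero_le_power2)
  show ?thesis unfolding Hom_def using assms(1,2) nz
    by (intro continuous_intros) auto
qed

lemma sph_Some: "sph (Some z) = (complex_of_real (2 / (1 + (cmod z)\<^sup>2)) * z,
                 ((cmod z)\<^sup>2 - 1) / ((cmod z)\<^sup>2 + 1))" by (simp add: sph_def)
lemma sph_None: "sph None = (0, 1)" by (simp add: sph_def)

definition psi :: "complex \<times> real \<Rightarrow> complex" where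
  "psi p = fst p / complex_of_real (1 - snd p)"

definition psi' :: "complex \<times> real \<Rightarrow> complex" where
  "psi' p = cnj (fst p) / complex_of_real (1 + snd p)"

lemma sph_snd_lt: "snd (sph (Some z)) < 1"
  unfolding sph_def using r3[of "(cmod z)\<^sup>2"] by simp

lemma sph_snd_gt: "z \<noteq> 0 \<Longrightarrow> snd (sph (Some z)) > -1"
  unfolding sph_def using r4[of "(cmod z)\<^sup>2"] by simp

lemma psi_sph: "psi (sph (Some z)) = z"
proof -
  have p: "1 + (cmod z)\<^sup>2 > 0" by (simp add: add_pos_nonneg)
  have e: "1 - ((cmod z)\<^sup>2 - 1) / ((cmod z)\<^sup>2 + 1) = 2 / (1 + (cmod z)\<^sup>2)"
    by (rule r5) simp
  have "psi (sph (Some z)) = complex_of_real (2 / (1 + (cmod z)\<^sup>2)) * z / complex_of_real (2 / (1 + (cmod z)\<^sup>2))"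
    unfolding psi_def sph_Some fst_conv snd_conv e by simp
  also have "\<dots> = z"
  proof (rule nonzero_mult_div_cancel_left)
    show "complex_of_real (2 / (1 + (cmod z)\<^sup>2)) \<noteq> 0" using p by (simp only: of_real_eq_0_iff) simp
  qed
  finally show ?thesis .
qed

lemma psi'_sph: assumes "z \<noteq> 0" shows "psi' (sph (Some z)) = 1 / z"
proof -
  have p: "1 + (cmod z)\<^sup>2 > 0" by (simp add: add_pos_nonneg)
  have nz: "(cmod z)\<^sup>2 > 0" using assms by simp
  have e: "1 + ((cmod z)\<^sup>2 - 1) / ((cmod z)\<^sup>2 + 1) = 2 * (cmod z)\<^sup>2 / (1 + (cmod z)\<^sup>2)"
    by (rule r6) simp
  have zz: "complex_of_real ((cmod z)\<^sup>2) = z * cnj z" by (rule complex_norm_square)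
  define r where "r = 2 / (1 + (cmod z)\<^sup>2)"
  have rs: "2 * (cmod z)\<^sup>2 / (1 + (cmod z)\<^sup>2) = r * (cmod z)\<^sup>2" unfolding r_def by simp
  have r0: "r \<noteq> 0" unfolding r_def using p by simp
  have "psi' (sph (Some z)) = complex_of_real r * cnj z / (complex_of_real r * complex_of_real ((cmod z)\<^sup>2))"
    unfolding psi'_def sph_Some fst_conv snd_conv e rs r_def[symmetric] by simp
  also have "\<dots> = cnj z / complex_of_real ((cmod z)\<^sup>2)" using r0 by simp
  also have "\<dots> = 1 / z" unfolding zz using assms by (simp add: field_simps)
  finally show ?thesis .
qed

lemma psi'_None: "psi' (sph None) = 0" unfolding psi'_def sph_def by simp

lemma inj_sph: "inj sph"
proof (rule injI)
  fix x y assume e: "sph x = sph y"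
  show "x = y"
  proof (cases x; cases y)
    fix a b assume "x = Some a" "y = Some b" thus ?thesis using e psi_sph by metis
  next
    fix a assume "x = Some a" "y = None" thus ?thesis using e sph_snd_lt[of a] by (simp add: sph_def)
  next
    fix a assume "x = None" "y = Some a" thus ?thesis using e sph_snd_lt[of a] by (simp add: sph_def)
  qed simp
qed

lemma psi_cont: "snd q \<noteq> 1 \<Longrightarrow> isCont psi q"
  unfolding psi_def by (intro continuous_intros) auto

lemma psi'_cont: "snd q \<noteq> -1 \<Longrightarrow> isCont psi' q"
  unfolding psi'_def by (intro continuous_intros) (auto simp: add_eq_0_iff)



lemma ext_cont:
  fixes f :: "complex option \<Rightarrow> complex option" and Nf Df Nt Dt :: "complex \<Rightarrow> complex"
  assumes fS: "\<And>z. f (Some z) = (if Df z = 0 then None else Some (Nf z / Df z))"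
    and fN: "f None = Some (Nt 0 / Dt 0)" and Dt0: "Dt 0 \<noteq> 0"
    and nz: "\<And>z. Nf z \<noteq> 0 \<or> Df z \<noteq> 0"
    and sc: "\<And>u. u \<noteq> 0 \<Longrightarrow> \<exists>c. c \<noteq> 0 \<and> Nt u = c * Nf (1/u) \<and> Dt u = c * Df (1/u)"
    and cNf: "\<And>z. isCont Nf z" and cDf: "\<And>z. isCont Df z"
    and cNt: "\<And>z. isCont Nt z" and cDt: "\<And>z. isCont Dt z"
  shows "continuous_on (range sph) (\<lambda>p. sph (f (inv sph p)))"
proof -
  define F where "F = (\<lambda>p. sph (f (inv sph p)))"
  have Fs: "F (sph w) = sph (f w)" for w unfolding F_def using inj_sph by simp
  have PhiS: "Hom (Nf z) (Df z) = sph (f (Some z))" for z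
  proof (cases "Df z = 0")
    case True thus ?thesis using nz[of z] fS[of z] Hom_None by simp
  next
    case False thus ?thesis using fS[of z] Hom_Some by simp
  qed
  have PhiN: "Hom (Nt u) (Dt u) = sph (f (if u = 0 then None else Some (1/u)))" for u
  proof (cases "u = 0")
    case True thus ?thesis using fN Dt0 Hom_Some by simp
  next
    case False
    then obtain c where c: "c \<noteq> 0" "Nt u = c * Nf (1/u)" "Dt u = c * Df (1/u)" using sc by blast
    have "Hom (Nt u) (Dt u) = Hom (Nf (1/u)) (Df (1/u))" unfolding c(2,3) using Hom_scale[OF c(1)] .
    thus ?thesis using PhiS False by simp
  qed
  have nzt: "Nt u \<noteq> 0 \<or> Dt u \<noteq> 0" for u
  proof (cases "u = 0")
    case True thus ?thesis using Dt0 by simp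
  next
    case False
    then obtain c where c: "c \<noteq> 0" "Nt u = c * Nf (1/u)" "Dt u = c * Df (1/u)" using sc by blast
    thus ?thesis using nz[of "1/u"] by simp
  qed
  have "continuous (at q within range sph) F" if q: "q \<in> range sph" for q
  proof -
    obtain w where w: "q = sph w" using q by auto
    show ?thesis
    proof (cases w)
      case (Some z0)
      define G where "G = (\<lambda>p. Hom (Nf (psi p)) (Df (psi p)))"
      have sq: "snd q < 1" using w Some sph_snd_lt by simp
      have cpsi: "isCont psi q" using psi_cont sq by simp
      have "isCont G q" unfolding G_def
      proof (rule Hom_cont)
        show "isCont (\<lambda>p. Nf (psi p)) q" using cpsi cNf by (rule isCont_o2)
        show "isCont (\<lambda>p. Df (psi p)) q" using cpsi cDf by (rule isCont_o2)
        show "Nf (psi q) \<noteq> 0 \<or> Df (psi q) \<noteq> 0" by (rule nz)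
      qed
      hence c1: "continuous (at q within range sph) G" by (rule continuous_at_imp_continuous_within)
      show ?thesis
      proof (rule continuous_transform_within[OF c1, of "1 - snd q"])
        show "0 < 1 - snd q" using sq by simp
        show "q \<in> range sph" using q .
        fix p assume p: "p \<in> range sph" "dist p q < 1 - snd q"
        obtain v where v: "p = sph v" using p(1) by auto
        have "dist (snd p) (snd q) < 1 - snd q" using p(2) dist_snd_le[of p q] by linarith
        hence "snd p < 1" by (simp add: dist_real_def)
        then obtain z where z: "v = Some z" using v by (cases v) (auto simp: sph_None)
        show "G p = F p" unfolding G_def v z Fs psi_sph PhiS ..
      qed
    next
      case None
      define G where "G = (\<lambda>p. Hom (Nt (psi' p)) (Dt (psi' p)))"
      have sq: "snd q = 1" using w None sph_None by simp
      have cpsi: "isCont psi' q" using psi'_cont sq by simp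
      have "isCont G q" unfolding G_def
      proof (rule Hom_cont)
        show "isCont (\<lambda>p. Nt (psi' p)) q" using cpsi cNt by (rule isCont_o2)
        show "isCont (\<lambda>p. Dt (psi' p)) q" using cpsi cDt by (rule isCont_o2)
        show "Nt (psi' q) \<noteq> 0 \<or> Dt (psi' q) \<noteq> 0" by (rule nzt)
      qed
      hence c1: "continuous (at q within range sph) G" by (rule continuous_at_imp_continuous_within)
      show ?thesis
      proof (rule continuous_transform_within[OF c1, of 2])
        show "(0::real) < 2" by simp
        show "q \<in> range sph" using q .
        fix p assume p: "p \<in> range sph" "dist p q < 2"
        obtain v where v: "p = sph v" using p(1) by auto
        have "dist (snd p) (snd q) < 2" using p(2) dist_snd_le[of p q] by linarith
        hence sp: "snd p > -1" using sq by (simp add: dist_real_def)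
        show "G p = F p"
        proof (cases v)
          case None thus ?thesis unfolding G_def v using PhiN[of 0] psi'_None by (simp add: Fs)
        next
          case (Some z)
          have z0: "z \<noteq> 0"
          proof
            assume "z = 0" thus False using sp v Some by (simp add: sph_Some)
          qed
          have "G p = sph (f (Some (1 / (1 / z))))" unfolding G_def v Some psi'_sph[OF z0] PhiN
            using z0 by simp
          thus ?thesis using Fs v Some by simp
        qed
      qed
    qed
  qed
  thus ?thesis unfolding F_def[symmetric] using continuous_on_eq_continuous_within by blast
qed



lemma basin_forward: "w \<in> basin f a \<Longrightarrow> f w \<in> basin f a"
proof -
  assume w: "w \<in> basin f a"
  have e: "(f ^^ k) (f w) = (f ^^ Suc k) w" for k by (simp add: funpow_Suc_right del: funpow.simps)
  have l0: "(\<lambda>k. sph ((f ^^ k) w)) \<longlonglongrightarrow> sph a" and n0: "\<forall>k. (f ^^ k) w \<noteq> a"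
    using w unfolding basin_def by auto
  have "(\<lambda>k. sph ((f ^^ Suc k) w)) \<longlonglongrightarrow> sph a" using LIMSEQ_Suc[OF l0] .
  moreover have "(\<lambda>k. sph ((f ^^ k) (f w))) = (\<lambda>k. sph ((f ^^ Suc k) w))" by (simp only: e)
  moreover have "(f ^^ k) (f w) \<noteq> a" for k unfolding e using n0 by blast
  ultimately show ?thesis unfolding basin_def by auto
qed

lemma sph_Some_cont: "isCont (\<lambda>z. sph (Some z)) z0"
proof -
  have "isCont (\<lambda>z. Hom z 1) z0" by (intro Hom_cont continuous_intros) simp
  moreover have "(\<lambda>z. Hom z 1) = (\<lambda>z. sph (Some z))" using Hom_Some[of 1] by auto
  ultimately show ?thesis by simp
qed

lemma sphE_conn: "connected (sph ` insert None (Some ` {z. cmod z > 1}))"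
proof -
  have eq: "sph ` insert None (Some ` {z. cmod z > 1}) = (\<lambda>u. Hom 1 u) ` ball 0 1"
  proof
    show "sph ` insert None (Some ` {z. cmod z > 1}) \<subseteq> (\<lambda>u. Hom 1 u) ` ball 0 1"
    proof
      fix x assume "x \<in> sph ` insert None (Some ` {z. cmod z > 1})"
      then obtain w where w: "w \<in> insert None (Some ` {z. cmod z > 1})" "x = sph w" by auto
      show "x \<in> (\<lambda>u. Hom 1 u) ` ball 0 1"
      proof (cases w)
        case None thus ?thesis using w Hom_None[of 1] by (auto intro!: image_eqI[of _ _ 0])
      next
        case (Some z)
        hence z: "cmod z > 1" using w by auto
        hence z0: "z \<noteq> 0" by auto
        have "x = Hom 1 (1/z)" using w Some Hom_Some[of "1/z" 1] z0 by simp
        moreover have "1/z \<in> ball 0 1" using z by (auto simp: norm_divide divide_less_eq)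
        ultimately show ?thesis by blast
      qed
    qed
    show "(\<lambda>u. Hom 1 u) ` ball 0 1 \<subseteq> sph ` insert None (Some ` {z. cmod z > 1})"
    proof
      fix x assume "x \<in> (\<lambda>u. Hom 1 u) ` ball 0 1"
      then obtain u where u: "cmod u < 1" "x = Hom 1 u" by auto
      show "x \<in> sph ` insert None (Some ` {z. cmod z > 1})"
      proof (cases "u = 0")
        case True thus ?thesis using u Hom_None[of 1] by auto
      next
        case False
        hence "x = sph (Some (1/u))" using u Hom_Some by simp
        moreover have "cmod (1/u) > 1" using u False by (simp add: norm_divide)
        ultimately show ?thesis by blast
      qed
    qed
  qed
  have "continuous_on (ball 0 1) (\<lambda>u. Hom 1 u)"
    by (intro continuous_at_imp_continuous_on ballI Hom_cont continuous_intros) simp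
  thus ?thesis unfolding eq by (rule connected_continuous_image) simp
qed

lemma orbit_conv:
  fixes f :: "complex option \<Rightarrow> complex option"
  assumes step: "\<And>y. cmod y > 1 \<Longrightarrow> \<exists>y'. f (Some y) = Some y' \<and> cmod y' > 1 \<and> Q y' \<ge> Q y + \<delta>"
    and d: "\<delta> > 0" and y: "cmod y > 1"
  shows "Some y \<in> basin f (Some 1)"
proof -
  have orb: "\<exists>y'. (f ^^ k) (Some y) = Some y' \<and> cmod y' > 1 \<and> Q y' \<ge> Q y + real k * \<delta>" for k
  proof (induction k)
    case 0 thus ?case using y by simp
  next
    case (Suc k)
    then obtain y' where y': "(f ^^ k) (Some y) = Some y'" "cmod y' > 1" "Q y' \<ge> Q y + real k * \<delta>" by blast
    obtain y'' where "f (Some y') = Some y''" "cmod y'' > 1" "Q y'' \<ge> Q y' + \<delta>" using step[OF y'(2)] by blast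
    thus ?case using y' by (auto simp: algebra_simps)
  qed
  define Y where "Y k = (SOME y'. (f ^^ k) (Some y) = Some y' \<and> cmod y' > 1 \<and> Q y' \<ge> Q y + real k * \<delta>)" for k
  have Y: "(f ^^ k) (Some y) = Some (Y k) \<and> cmod (Y k) > 1 \<and> Q (Y k) \<ge> Q y + real k * \<delta>" for k
    unfolding Y_def using someI_ex[OF orb[of k]] .
  have lim: "Y \<longlonglongrightarrow> 1"
  proof (rule LIMSEQ_I)
    fix e :: real assume e: "e > 0"
    obtain N :: nat where N: "real N > (1/e - Q y) / \<delta>" using reals_Archimedean2 by blast
    have "\<forall>k\<ge>N. norm (Y k - 1) < e"
    proof (intro allI impI)
      fix k assume k: "k \<ge> N"
      have "real N * \<delta> > 1/e - Q y" using N d by (simp add: field_simps)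
      moreover have "real k * \<delta> \<ge> real N * \<delta>" using k d by (intro mult_right_mono) auto
      ultimately have qk: "Q (Y k) > 1/e" using Y[of k] by linarith
      have Y1: "Y k \<noteq> 1" using Y[of k] by auto
      have "Q (Y k) \<le> cmod (1 / (Y k - 1))" unfolding Q_def by (rule complex_Re_le_cmod)
      hence "1/e < 1 / cmod (Y k - 1)" using qk by (simp add: norm_divide)
      thus "norm (Y k - 1) < e" using e Y1 by (simp add: field_simps)
    qed
    thus "\<exists>N. \<forall>k\<ge>N. norm (Y k - 1) < e" by blast
  qed
  have "(\<lambda>k. sph (Some (Y k))) \<longlonglongrightarrow> sph (Some 1)"
    using isCont_tendsto_compose[OF sph_Some_cont lim] .
  moreover have "(\<lambda>k. sph ((f ^^ k) (Some y))) = (\<lambda>k. sph (Some (Y k)))" using Y by simp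
  moreover have "(f ^^ k) (Some y) \<noteq> Some 1" for k using Y[of k] by auto
  ultimately show ?thesis unfolding basin_def by auto
qed

lemma basin_gen:
  fixes f :: "complex option \<Rightarrow> complex option"
  assumes cont: "continuous_on (range sph) (\<lambda>p. sph (f (inv sph p)))"
    and step: "\<And>y. cmod y > 1 \<Longrightarrow> \<exists>y'. f (Some y) = Some y' \<and> cmod y' > 1 \<and> Q y' \<ge> Q y + \<delta>"
    and d: "\<delta> > 0" and fN: "f None = Some c" and c: "cmod c > 1"
  shows "\<exists>U. immediate_basin f (Some 1) U \<and> insert None (Some ` {z. cmod z > 1}) \<subseteq> U"
proof -
  define E where "E = insert None (Some ` {z. cmod z > 1})"
  define B where "B = basin f (Some 1)"
  have SomeB: "Some y \<in> B" if "cmod y > 1" for y unfolding B_def using orbit_conv[OF step d that] .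
  have NoneB: "None \<in> B"
  proof -
    have cB: "Some c \<in> B" using SomeB c .
    have e: "(f ^^ Suc k) None = (f ^^ k) (Some c)" for k
      by (simp add: funpow_Suc_right fN del: funpow.simps)
    have "(\<lambda>k. sph ((f ^^ Suc k) None)) \<longlonglongrightarrow> sph (Some 1)" unfolding e using cB unfolding B_def basin_def by auto
    hence "(\<lambda>k. sph ((f ^^ k) None)) \<longlonglongrightarrow> sph (Some 1)" by (rule LIMSEQ_imp_Suc)
    moreover have "(f ^^ k) None \<noteq> Some 1" for k
    proof (cases k)
      case (Suc j) thus ?thesis using cB e[of j] unfolding B_def basin_def by auto
    qed simp
    ultimately show ?thesis unfolding B_def basin_def by auto
  qed
  have EB: "E \<subseteq> B" unfolding E_def using NoneB SomeB by auto
  define C where "C = connected_component_set (sph ` B) (sph None)"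
  define U where "U = sph -` C"
  have CB: "C \<subseteq> sph ` B" unfolding C_def by (rule connected_component_subset)
  have sU: "sph ` U = C" unfolding U_def using CB by auto
  have EC: "sph ` E \<subseteq> C" unfolding C_def
    by (rule connected_component_maximal) (use EB sphE_conn in \<open>auto simp: E_def\<close>)
  have EU: "E \<subseteq> U" unfolding U_def using EC by auto
  define F where "F = (\<lambda>p. sph (f (inv sph p)))"
  have Fs: "F (sph w) = sph (f w)" for w unfolding F_def using inj_sph by simp
  have FC: "F ` C \<subseteq> C"
  proof -
    have "continuous_on C F" using cont unfolding F_def[symmetric]
      by (rule continuous_on_subset) (use CB in auto)
    hence conn: "connected (F ` C)" using connected_continuous_image connected_connected_component
      unfolding C_def by blast
    have sub: "F ` C \<subseteq> sph ` B"
    proof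
      fix x assume "x \<in> F ` C"
      then obtain p where p: "p \<in> C" "x = F p" by auto
      obtain w where "w \<in> B" "p = sph w" using p CB by auto
      thus "x \<in> sph ` B" using p Fs basin_forward unfolding B_def by auto
    qed
    have x0: "sph (Some c) \<in> F ` C"
    proof -
      have "sph None \<in> C" using EC unfolding E_def by auto
      hence "F (sph None) \<in> F ` C" by blast
      thus ?thesis using Fs fN by simp
    qed
    have x0C: "sph (Some c) \<in> C" using EC c unfolding E_def by auto
    have "F ` C \<subseteq> connected_component_set (sph ` B) (sph (Some c))"
      by (rule connected_component_maximal[OF x0 conn sub])
    also have "\<dots> = C" unfolding C_def using x0C[unfolded C_def] by (rule connected_component_eq)
    finally show ?thesis .
  qed
  have fU: "f ` U \<subseteq> U"
  proof
    fix x assume "x \<in> f ` U"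
    then obtain w where w: "w \<in> U" "x = f w" by auto
    have "sph w \<in> C" using w U_def by auto
    hence "F (sph w) \<in> C" using FC by auto
    thus "x \<in> U" using w Fs unfolding U_def by auto
  qed
  have "immediate_basin f (Some 1) U"
    unfolding immediate_basin_def using NoneB sU fU unfolding C_def B_def by blast
  thus ?thesis using EU unfolding E_def by blast
qed



lemma half_aux2: "(a::real) \<ge> 1 \<Longrightarrow> a*(-1/2) < p \<Longrightarrow> -1/2 < a - 1 + p" by linarith

lemma nopole: assumes K: "K \<ge> 2" and w: "cmod w > 1" shows "1 + (of_nat K - 1) * w \<noteq> 0"
proof
  assume h: "1 + (of_nat K - 1) * w = 0"
  have "cmod ((of_nat K - 1) * w) = (real K - 1) * cmod w"
  proof -
    have "(of_nat K - 1 :: complex) = complex_of_real (real K - 1)" by simp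
    hence "cmod (of_nat K - 1 :: complex) = real K - 1" using K by (simp only: norm_of_real)
    thus ?thesis by (simp add: norm_mult)
  qed
  moreover have "(real K - 1) * cmod w > 1"
  proof -
    have "(real K - 1) * cmod w \<ge> 1 * cmod w" using K w by (intro mult_right_mono) auto
    thus ?thesis using w by simp
  qed
  moreover have "(of_nat K - 1) * w = -1" using h by (simp add: algebra_simps add_eq_0_iff)
  ultimately show False by simp
qed

lemma pow_gt1: "cmod (y::complex) > 1 \<Longrightarrow> k \<ge> 1 \<Longrightarrow> cmod (y ^ k) > 1"
  by (simp add: norm_power one_less_power)

lemma hn_strict: assumes n: "n \<ge> 2" and y: "cmod y > 1"
  shows "\<exists>y'. hn_ext n (Some y) = Some y' \<and> cmod y' > 1 \<and> Q y' \<ge> Q y + (real n - 1) / 2"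
proof -
  have yn: "cmod (y^n) > 1" using pow_gt1 y n by simp
  hence yn1: "y^n \<noteq> 1" by auto
  have D: "1 + (of_nat n - 1) * y ^ n \<noteq> 0" using nopole[OF n yn] .
  have y1: "y \<noteq> 1" using y by auto
  have st: "hn n y \<noteq> 1" "Q (hn n y) \<ge> Q y + (real n - 1) / 2"
    using hn_step[OF _ _ yn1 D] n y by auto
  have "Q y > -1/2" using Q_gt_half_iff[OF y1] y by simp
  moreover have "(real n - 1) / 2 > 0" using n by simp
  ultimately have "Q (hn n y) > -1/2" using st(2) by linarith
  hence "cmod (hn n y) > 1" using Q_gt_half_iff[OF st(1)] by simp
  thus ?thesis using st D unfolding hn_ext_def by auto
qed

lemma hmn_strict: assumes m: "m \<ge> 2" and n: "n \<ge> 2" and y: "cmod y > 1"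
  shows "\<exists>y'. hmn_ext m n (Some y) = Some y' \<and> cmod y' > 1 \<and> Q y' \<ge> Q y + (real (m*n) - 1) / (2 * real n)"
proof -
  have N: "m * n \<ge> 2" using mult_le_mono[OF m n] by simp
  have ym: "cmod (y^m) > 1" using pow_gt1 y m by simp
  hence ym1: "y^m \<noteq> 1" by auto
  have D: "1 + (of_nat (m*n) - 1) * y ^ m \<noteq> 0" using nopole[OF N ym] .
  define g where "g = G (m*n) (y^m)"
  have g1: "g \<noteq> 1" unfolding g_def using G_props(1)[OF ym1 D] m n by simp
  have Qg: "Q g = real (m*n) - 1 + real (m*n) * Q (y^m)" unfolding g_def using G_props(2)[OF ym1 D] m n by simp
  have Qw: "Q (y^m) > -1/2" using Q_gt_half_iff[OF ym1] ym by simp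
  have "real (m*n) * Q (y^m) > real (m*n) * (-1/2)" using Qw m n
    by (intro mult_strict_left_mono) auto
  moreover have "real (m*n) \<ge> 1" using N by linarith
  ultimately have "Q g > -1/2" unfolding Qg using half_aux2 by blast
  hence "cmod g > 1" using Q_gt_half_iff[OF g1] by simp
  hence gn: "cmod (g^n) > 1" using pow_gt1 n by simp
  hence gn1: "g^n \<noteq> 1" by auto
  have st: "hmn m n y \<noteq> 1" "Q (hmn m n y) \<ge> Q y + (real (m*n) - 1) / (2 * real n)"
    using hmn_step[OF _ _ _ ym1 D gn1[unfolded g_def]] m n y by auto
  have "cmod (hmn m n y) > 1" unfolding hmn_G using gn g_def by simp
  thus ?thesis using st D unfolding hmn_ext_def by auto
qed

lemma hn_basin: assumes n: "n \<ge> 2"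
  shows "\<exists>U. immediate_basin (hn_ext n) (Some 1) U \<and> insert None (Some ` {z. cmod z > 1}) \<subseteq> U"
proof (rule basin_gen)
  show "continuous_on (range sph) (\<lambda>p. sph (hn_ext n (inv sph p)))"
  proof (rule ext_cont[where Nf = "\<lambda>z. of_nat n * z ^ n" and Df = "\<lambda>z. 1 + (of_nat n - 1) * z ^ n"
        and Nt = "\<lambda>u. of_nat n" and Dt = "\<lambda>u. u ^ n + (of_nat n - 1)"])
    show "hn_ext n (Some z) = (if 1 + (of_nat n - 1) * z ^ n = 0 then None
            else Some (of_nat n * z ^ n / (1 + (of_nat n - 1) * z ^ n)))" for z
      unfolding hn_ext_def hn_def by simp
    show "hn_ext n None = Some (of_nat n / (0 ^ n + (of_nat n - 1)))" unfolding hn_ext_def using n by simp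
    show "0 ^ n + (of_nat n - 1 :: complex) \<noteq> 0"
    proof -
      have e: "0 ^ n + (of_nat n - 1 :: complex) = of_nat (n - 1)" using n by (simp add: of_nat_diff)
      show ?thesis unfolding e using n by (simp only: of_nat_eq_0_iff)
    qed
    show "of_nat n * z ^ n \<noteq> 0 \<or> 1 + (of_nat n - 1) * z ^ n \<noteq> 0" for z :: complex
      by (cases "z = 0") (use n in \<open>auto simp: power_0_left\<close>)
    show "\<exists>c. c \<noteq> 0 \<and> of_nat n = c * (of_nat n * (1/u) ^ n) \<and> u ^ n + (of_nat n - 1) = c * (1 + (of_nat n - 1) * (1/u) ^ n)"
      if u: "u \<noteq> 0" for u :: complex
      by (rule exI[of _ "u^n"]) (use u in \<open>simp add: power_divide field_simps\<close>)
  qed (intro continuous_intros)+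
  show "\<And>y. cmod y > 1 \<Longrightarrow> \<exists>y'. hn_ext n (Some y) = Some y' \<and> cmod y' > 1 \<and> Q y' \<ge> Q y + (real n - 1) / 2"
    using hn_strict[OF n] by blast
  show "(real n - 1) / 2 > 0" using n by simp
  show "hn_ext n None = Some (complex_of_real (real n / (real n - 1)))" unfolding hn_ext_def by simp
  show "cmod (complex_of_real (real n / (real n - 1))) > 1"
  proof -
    have x: "real n / (real n - 1) > 1" using n by (intro gt1_div) simp
    have "cmod (complex_of_real (real n / (real n - 1))) = \<bar>real n / (real n - 1)\<bar>" by (rule norm_of_real)
    thus ?thesis using x by linarith
  qed
qed

lemma hmn_basin: assumes m: "m \<ge> 2" and n: "n \<ge> 2"
  shows "\<exists>U. immediate_basin (hmn_ext m n) (Some 1) U \<and> insert None (Some ` {z. cmod z > 1}) \<subseteq> U"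
proof -
  define K :: complex where "K = of_nat (m*n)"
  have N: "m * n \<ge> 4" using mult_le_mono[OF m n] by simp
  have K1nz: "K - 1 \<noteq> 0"
  proof
    assume "K - 1 = 0" hence "of_nat (m*n) = (1::complex)" unfolding K_def by simp
    hence "m * n = 1" by (metis of_nat_eq_1_iff)
    thus False using N by simp
  qed
  have Knz: "K \<noteq> 0"
  proof
    assume "K = 0" hence "m * n = 0" unfolding K_def by (metis of_nat_eq_0_iff)
    thus False using m n by simp
  qed
  show ?thesis
  proof (rule basin_gen)
    show "continuous_on (range sph) (\<lambda>p. sph (hmn_ext m n (inv sph p)))"
    proof (rule ext_cont[where Nf = "\<lambda>z. K ^ n * z ^ (m*n)" and Df = "\<lambda>z. (1 + (K - 1) * z ^ m) ^ n"
          and Nt = "\<lambda>u. K ^ n" and Dt = "\<lambda>u. (u ^ m + (K - 1)) ^ n"])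
      show "hmn_ext m n (Some z) = (if (1 + (K - 1) * z ^ m) ^ n = 0 then None
              else Some (K ^ n * z ^ (m*n) / (1 + (K - 1) * z ^ m) ^ n))" for z
        unfolding hmn_ext_def hmn_def K_def using n by simp
      show "hmn_ext m n None = Some (K ^ n / (0 ^ m + (K - 1)) ^ n)" unfolding hmn_ext_def K_def
        using m by (simp add: power_0_left)
      show "(0 ^ m + (K - 1)) ^ n \<noteq> 0" using m K1nz by (simp add: power_0_left)
      show "K ^ n * z ^ (m*n) \<noteq> 0 \<or> (1 + (K - 1) * z ^ m) ^ n \<noteq> 0" for z :: complex
        by (cases "z = 0") (use m n Knz in \<open>auto simp: power_0_left\<close>)
      show "\<exists>c. c \<noteq> 0 \<and> K ^ n = c * (K ^ n * (1/u) ^ (m*n)) \<and> (u ^ m + (K - 1)) ^ n = c * (1 + (K - 1) * (1/u) ^ m) ^ n"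
        if u: "u \<noteq> 0" for u :: complex
      proof (rule exI[of _ "u^(m*n)"], intro conjI)
        show "u^(m*n) \<noteq> 0" using u by simp
        show "K ^ n = u ^ (m * n) * (K ^ n * (1 / u) ^ (m * n))" using u by (simp add: power_divide)
        have "u ^ m * (1 + (K - 1) * (1 / u) ^ m) = u ^ m + (K - 1)" using u
          by (simp add: power_divide field_simps)
        hence "(u ^ m + (K - 1)) ^ n = (u ^ m) ^ n * (1 + (K - 1) * (1 / u) ^ m) ^ n"
          by (metis power_mult_distrib)
        thus "(u ^ m + (K - 1)) ^ n = u ^ (m * n) * (1 + (K - 1) * (1 / u) ^ m) ^ n"
          by (simp add: power_mult)
      qed
    qed (intro continuous_intros)+
    show "\<And>y. cmod y > 1 \<Longrightarrow> \<exists>y'. hmn_ext m n (Some y) = Some y' \<and> cmod y' > 1 \<and> Q y' \<ge> Q y + (real (m*n) - 1) / (2 * real n)"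
      using hmn_strict[OF m n] by blast
    show "(real (m*n) - 1) / (2 * real n) > 0" using N n
      by (intro divide_pos_pos) linarith+
    show "hmn_ext m n None = Some (complex_of_real ((real (m*n) / (real (m*n) - 1))^n))"
      unfolding hmn_ext_def by (simp add: power_divide)
    show "cmod (complex_of_real ((real (m*n) / (real (m*n) - 1))^n)) > 1"
    proof -
      have "real (m*n) / (real (m*n) - 1) > 1" using N by (intro gt1_div) linarith
      hence x: "(real (m*n) / (real (m*n) - 1))^n > 1" using n by (intro one_less_power) auto
      have "cmod (complex_of_real ((real (m*n) / (real (m*n) - 1))^n)) = \<bar>(real (m*n) / (real (m*n) - 1))^n\<bar>"
        by (rule norm_of_real)
      thus ?thesis using x by linarith
    qed
  qed
qed


theorem lemma2p6:
  fixes m n :: nat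
  assumes "m \<ge> 2" and "n \<ge> 2"
  shows "hn n 1 = 1 \<and> (hn n has_field_derivative 1) (at 1)
       \<and> hmn m n 1 = 1 \<and> (hmn m n has_field_derivative 1) (at 1)
       \<and> (\<forall>r::real. r \<ge> 1 \<longrightarrow>
             hn_ext n ` Dr'_closure r \<subseteq> insert (Some 1) (Dr' r)
           \<and> hmn_ext m n ` Dr'_closure r \<subseteq> insert (Some 1) (Dr' r))
       \<and> (\<exists>U. immediate_basin (hn_ext n) (Some 1) U
              \<and> insert None (Some ` {z. cmod z > 1}) \<subseteq> U)
       \<and> (\<exists>U. immediate_basin (hmn_ext m n) (Some 1) U
              \<and> insert None (Some ` {z. cmod z > 1}) \<subseteq> U)"
  using hn_one[OF assms(2)] hn_deriv[OF assms(2)] hmn_one[OF assms] hmn_deriv[OF assms]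
    hn_Dr[OF assms(2)] hmn_Dr[OF assms] hn_basin[OF assms(2)] hmn_basin[OF assms]
  by blast

end
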